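(* Let $\mathbf{W}^0$ be a real $N\times N$ matrix, let $\mathbf{u}=(1,\dots,1)^T/\sqrt N\in\mathbb{R}^N$, $\mathbf{H}=\mathbf{u}\mathbf{u}^T$ and $\boldsymbol\Theta=\mathbf{I}-\mathbf{H}$, and for $n\ge1$ let $\mathbf{W}^\theta_n=(\mathbf{W}^0\boldsymbol\Theta)^{n-1}\mathbf{W}^0$. Then the motif cumulants of $\mathbf{W}^0$ satisfy, for all $n,m\ge1$, $$\kappa_n=\frac{1}{N^n}\,\mathbf{u}^T\mathbf{W}^\theta_n\mathbf{u}=\frac{1}{N^{n+1}}\sum_{i,j}\big((\mathbf{W}^0\boldsymbol\Theta)^{n-1}\mathbf{W}^0\big)_{ij},$$ $$\kappa_{n,m}=\frac{1}{N^{n+m}}\,\mathbf{u}^T\mathbf{W}^\theta_n\,\boldsymbol\Theta\,(\mathbf{W}^\theta_m)^T\mathbf{u}=\frac{1}{N^{n+m}}\,\mathbf{u}^T(\mathbf{W}^0\boldsymbol\Theta)^{n-1}\mathbf{W}^0\boldsymbol\Theta(\mathbf{W}^0)^T(\boldsymbol\Theta(\mathbf{W}^0)^T)^{m-1}\mathbf{u}.$$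
   Context: Notation: for an $N\times N$ matrix $\mathbf{X}$, $\langle\mathbf{X}\rangle=\frac1{N^2}\sum_{i,j}\mathbf{X}_{ij}$. Motif moments: for integers $n,m\ge0$, $\mu_{n,m}=\langle(\mathbf{W}^0)^n((\mathbf{W}^0)^T)^m\rangle/N^{n+m-1}$, and $\mu_n:=\mu_{n,0}$. A composition of a positive integer $n$ is an ordered tuple $(n_1,\dots,n_t)$ of positive integers with $n_1+\dots+n_t=n$; $\mathcal{C}(n)$ denotes the set of compositions of $n$. Motif cumulants: the numbers $\kappa_n$ ($n\ge1$) and $\kappa_{n,m}$ ($n,m\ge1$) are defined recursively (uniquely) by requiring, for all $n,m\ge1$, $$\mu_n=\sum_{(n_1,\dots,n_t)\in\mathcal{C}(n)}\prod_{i=1}^t\kappa_{n_i},\qquad \mu_{n,m}=\sum_{\substack{(n_1,\dots,n_t)\in\mathcal{C}(n)\\(m_1,\dots,m_s)\in\mathcal{C}(m)}}\Big(\prod_{i=2}^t\kappa_{n_i}\Big)\big(\kappa_{n_1,m_1}+\kappa_{n_1}\kappa_{m_1}\big)\Big(\prod_{j=2}^s\kappa_{m_j}\Big),$$ where an empty product equals $1$. *)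

theory Defs
  imports "HOL-Analysis.Analysis"
begin

primrec mpow :: "real^'n^'n \<Rightarrow> nat \<Rightarrow> real^'n^'n" where
  "mpow A 0 = mat 1"
| "mpow A (Suc k) = A ** mpow A k"

definition mavg :: "real^'n^'n \<Rightarrow> real" where
  "mavg X = (\<Sum>i\<in>UNIV. \<Sum>j\<in>UNIV. X $ i $ j) / (real CARD('n))^2"

definition motif_moment :: "real^'n^'n \<Rightarrow> nat \<Rightarrow> nat \<Rightarrow> real" where
  "motif_moment W n m =
     mavg (mpow W n ** mpow (transpose W) m) / (real CARD('n)) ^ (n + m - 1)"

definition compositions :: "nat \<Rightarrow> nat list set" where
  "compositions n = {c. (\<forall>x\<in>set c. 0 < x) \<and> sum_list c = n}"

definition cumulant_system ::
  "real^'n^'n \<Rightarrow> (nat \<Rightarrow> real) \<Rightarrow> (nat \<Rightarrow> nat \<Rightarrow> real) \<Rightarrow> bool" where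
  "cumulant_system W k k2 \<longleftrightarrow>
     (\<forall>n\<ge>1. motif_moment W n 0 =
          (\<Sum>c\<in>compositions n. prod_list (map k c))) \<and>
     (\<forall>n\<ge>1. \<forall>m\<ge>1. motif_moment W n m =
          (\<Sum>c\<in>compositions n. \<Sum>d\<in>compositions m.
              prod_list (map k (tl c)) * (k2 (hd c) (hd d) + k (hd c) * k (hd d))
              * prod_list (map k (tl d))))"

text \<open>The motif cumulants: the unique solution of the system (only indices >= 1
  are meaningful; values at index 0 are normalised to 0 to make the choice unique).\<close>
definition motif_cumulants :: "real^'n^'n \<Rightarrow> (nat \<Rightarrow> real) \<times> (nat \<Rightarrow> nat \<Rightarrow> real)" where
  "motif_cumulants W = (THE p. cumulant_system W (fst p) (snd p) \<and> fst p 0 = 0 \<and>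
       (\<forall>n m. (n = 0 \<or> m = 0) \<longrightarrow> snd p n m = 0))"

definition kappa1 :: "real^'n^'n \<Rightarrow> nat \<Rightarrow> real" where
  "kappa1 W n = fst (motif_cumulants W) n"

definition kappa2 :: "real^'n^'n \<Rightarrow> nat \<Rightarrow> nat \<Rightarrow> real" where
  "kappa2 W n m = snd (motif_cumulants W) n m"

definition uvec :: "real^'n" where
  "uvec = (\<chi> i. 1 / sqrt (real CARD('n)))"

definition Hmat :: "real^'n^'n" where
  "Hmat = (\<chi> i j. uvec $ i * uvec $ j)"

definition Theta :: "real^'n^'n" where
  "Theta = mat 1 - Hmat"

definition Wtheta :: "real^'n^'n \<Rightarrow> nat \<Rightarrow> real^'n^'n" where
  "Wtheta W n = mpow (W ** Theta) (n - 1) ** W"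

end

theory Submission
  imports Defs
begin





lemma comp_len: "(\<forall>x\<in>set c. 0 < (x::nat)) \<Longrightarrow> length c \<le> sum_list c"
  by (induction c) (auto simp: Suc_le_eq)

lemma comp_elem: "x \<in> set c \<Longrightarrow> x \<le> sum_list (c::nat list)"
  by (simp add: member_le_sum_list)

lemma finite_comp: "finite (compositions n)"
proof -
  have "compositions n \<subseteq> {xs. set xs \<subseteq> {..n} \<and> length xs \<le> n}"
    unfolding compositions_def using comp_len comp_elem by fastforce
  moreover have "finite {xs. set xs \<subseteq> {..n} \<and> length xs \<le> n}"
    by (rule finite_lists_length_le) simp
  ultimately show ?thesis by (rule finite_subset)
qed

lemma comp0: "compositions 0 = {[]}"
  unfolding compositions_def by (auto simp: sum_list_eq_0_iff) (metis list.set_intros(1) neq_Nil_conv less_irrefl)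

lemma comp_split: "n \<ge> 1 \<Longrightarrow> compositions n = (\<Union>k\<in>{1..n}. (Cons k) ` compositions (n-k))"
proof (intro equalityI subsetI)
  fix c assume n: "n \<ge> 1" and c: "c \<in> compositions n"
  then obtain k c' where ck: "c = k # c'" unfolding compositions_def by (cases c) auto
  with c have "k \<in> {1..n}" "c' \<in> compositions (n-k)"
    unfolding compositions_def by auto
  then show "c \<in> (\<Union>k\<in>{1..n}. (Cons k) ` compositions (n-k))"
    using ck by blast
next
  fix c assume "c \<in> (\<Union>k\<in>{1..n}. (Cons k) ` compositions (n-k))"
  then show "c \<in> compositions n" unfolding compositions_def by auto
qed

lemma sum_comp:
  assumes "n \<ge> 1"
  shows "(\<Sum>c\<in>compositions n. g c) = (\<Sum>k\<in>{1..n}. \<Sum>c\<in>compositions (n-k). g (k # c))"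
proof -
  have "(\<Sum>c\<in>compositions n. g c) = (\<Sum>k\<in>{1..n}. \<Sum>c\<in>(Cons k) ` compositions (n-k). g c)"
    unfolding comp_split[OF assms]
    by (rule sum.UNION_disjoint) (auto simp: finite_comp)
  also have "\<dots> = (\<Sum>k\<in>{1..n}. \<Sum>c\<in>compositions (n-k). g (k # c))"
    by (rule sum.cong[OF refl]) (simp add: sum.reindex)
  finally show ?thesis .
qed

definition Pk :: "(nat \<Rightarrow> real) \<Rightarrow> nat \<Rightarrow> real" where
  "Pk k j = (\<Sum>c\<in>compositions j. prod_list (map k c))"

lemma Pk0: "Pk k 0 = 1" by (simp add: Pk_def comp0)

lemma Pk_rec: "n \<ge> 1 \<Longrightarrow> Pk k n = (\<Sum>a\<in>{1..n}. k a * Pk k (n - a))"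
  unfolding Pk_def by (subst sum_comp) (simp_all add: sum_distrib_left)

lemma sum2_comp:
  assumes "n \<ge> 1" "m \<ge> 1"
  shows "(\<Sum>c\<in>compositions n. \<Sum>d\<in>compositions m.
              prod_list (map k (tl c)) * g (hd c) (hd d) * prod_list (map k (tl d)))
       = (\<Sum>a\<in>{1..n}. \<Sum>b\<in>{1..m}. Pk k (n-a) * g a b * Pk k (m-b))" (is "?lhs = ?rhs")
proof -
  have "?lhs = (\<Sum>a\<in>{1..n}. \<Sum>c\<in>compositions (n-a). \<Sum>b\<in>{1..m}. \<Sum>d\<in>compositions (m-b).
              prod_list (map k c) * g a b * prod_list (map k d))"
    by (subst sum_comp[OF assms(1)], subst sum_comp[OF assms(2)]) simp
  also have "\<dots> = (\<Sum>a\<in>{1..n}. \<Sum>b\<in>{1..m}. \<Sum>c\<in>compositions (n-a). \<Sum>d\<in>compositions (m-b).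
              prod_list (map k c) * g a b * prod_list (map k d))"
    by (rule sum.cong[OF refl], rule sum.swap)
  also have "\<dots> = ?rhs"
  proof (rule sum.cong[OF refl], rule sum.cong[OF refl])
    fix a b
    have "Pk k (n-a) * g a b * Pk k (m-b) = (\<Sum>c\<in>compositions (n-a). prod_list (map k c) * g a b) * Pk k (m-b)"
      unfolding Pk_def by (simp add: sum_distrib_right)
    also have "\<dots> = (\<Sum>c\<in>compositions (n-a). \<Sum>d\<in>compositions (m-b).
              prod_list (map k c) * g a b * prod_list (map k d))"
      unfolding Pk_def by (rule sum_product)
    finally show "(\<Sum>c\<in>compositions (n-a). \<Sum>d\<in>compositions (m-b).
              prod_list (map k c) * g a b * prod_list (map k d)) = Pk k (n-a) * g a b * Pk k (m-b)" by simp
  qed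
  finally show ?thesis .
qed





definition ev :: "real^'n" where "ev = (\<chi> i. 1)"

lemma Npos: "real CARD('n::finite) > 0" by simp

lemma uvec_sq: "(uvec::real^'n) $ i * (uvec::real^'n) $ j = 1 / real CARD('n)"
proof -
  have "sqrt (real CARD('n)) * sqrt (real CARD('n)) = real CARD('n)" by simp
  then show ?thesis unfolding uvec_def by simp
qed

lemma rowH: "y v* (Hmat::real^'n^'n) = ((y \<bullet> ev) / real CARD('n)) *\<^sub>R ev"
  by (simp add: vector_matrix_mult_def Hmat_def uvec_sq inner_vec_def ev_def vec_eq_iff
      sum_divide_distrib)

lemma rowTheta: "y v* (Theta::real^'n^'n) = y - ((y \<bullet> ev) / real CARD('n)) *\<^sub>R ev"
  by (simp add: Theta_def vector_matrix_mult_diff_rdistrib rowH)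

lemma mpow_Suc_right: "mpow A (Suc k) = mpow A k ** A"
  by (induction k) (simp_all add: matrix_mul_assoc)

lemma mpow_transpose: "mpow (transpose A) k = transpose (mpow A k)"
proof (induction k)
  case (Suc k)
  have "transpose (mpow A (Suc k)) = transpose (mpow A k ** A)" by (simp only: mpow_Suc_right)
  then show ?case using Suc by (simp add: matrix_transpose_mul)
qed simp

lemma Wtheta_Suc: "W ** Theta ** Wtheta W (Suc n) = Wtheta W (Suc (Suc n))"
  by (simp add: Wtheta_def matrix_mul_assoc)

lemma row_W_X: fixes W :: "real^'n^'n" shows "x v* (W ** Wtheta W (Suc n)) =
   x v* Wtheta W (Suc (Suc n)) + (((x v* W) \<bullet> ev) / real CARD('n)) *\<^sub>R (ev v* Wtheta W (Suc n))"
proof -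
  have "x v* (W ** Wtheta W (Suc n)) = ((x v* W) v* (Theta + Hmat)) v* Wtheta W (Suc n)"
    by (simp add: Theta_def vector_matrix_mul_assoc)
  also have "\<dots> = ((x v* W) v* Theta) v* Wtheta W (Suc n) + ((x v* W) v* Hmat) v* Wtheta W (Suc n)"
    by (simp add: vector_matrix_mult_add_rdistrib vector_matrix_left_distrib)
  also have "((x v* W) v* Theta) v* Wtheta W (Suc n) = x v* Wtheta W (Suc (Suc n))"
    by (simp add: vector_matrix_mul_assoc Wtheta_Suc[symmetric])
  also have "((x v* W) v* Hmat) v* Wtheta W (Suc n) = (((x v* W) \<bullet> ev) / real CARD('n)) *\<^sub>R (ev v* Wtheta W (Suc n))"
    by (simp add: rowH scaleR_vector_matrix_assoc)
  finally show ?thesis .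
qed

lemma rowB: fixes W :: "real^'n^'n" shows "x v* mpow W (Suc n) = x v* Wtheta W (Suc n) +
   (\<Sum>k\<in>{1..n}. (((x v* mpow W (Suc n - k)) \<bullet> ev) / real CARD('n)) *\<^sub>R (ev v* Wtheta W k))"
proof (induction n arbitrary: x)
  case 0
  then show ?case by (simp add: Wtheta_def)
next
  case (Suc n)
  have "x v* mpow W (Suc (Suc n)) = (x v* W) v* mpow W (Suc n)"
    by (simp add: vector_matrix_mul_assoc)
  also have "\<dots> = (x v* W) v* Wtheta W (Suc n) +
   (\<Sum>k\<in>{1..n}. ((((x v* W) v* mpow W (Suc n - k)) \<bullet> ev) / real CARD('n)) *\<^sub>R (ev v* Wtheta W k))"
    by (rule Suc.IH)
  also have "(\<Sum>k\<in>{1..n}. ((((x v* W) v* mpow W (Suc n - k)) \<bullet> ev) / real CARD('n)) *\<^sub>R (ev v* Wtheta W k))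
     = (\<Sum>k\<in>{1..n}. (((x v* mpow W (Suc (Suc n) - k)) \<bullet> ev) / real CARD('n)) *\<^sub>R (ev v* Wtheta W k))"
  proof (rule sum.cong[OF refl])
    fix k assume "k \<in> {1..n}"
    then have "Suc (Suc n) - k = Suc (Suc n - k)" by auto
    then show "((((x v* W) v* mpow W (Suc n - k)) \<bullet> ev) / real CARD('n)) *\<^sub>R (ev v* Wtheta W k)
     = (((x v* mpow W (Suc (Suc n) - k)) \<bullet> ev) / real CARD('n)) *\<^sub>R (ev v* Wtheta W k)"
      by (simp add: vector_matrix_mul_assoc)
  qed
  also have "(x v* W) v* Wtheta W (Suc n) = x v* Wtheta W (Suc (Suc n)) +
      (((x v* mpow W (Suc (Suc n) - Suc n)) \<bullet> ev) / real CARD('n)) *\<^sub>R (ev v* Wtheta W (Suc n))"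
    by (simp add: vector_matrix_mul_assoc row_W_X)
  finally show ?case by (simp add: add.assoc)
qed

lemma summ: "(\<Sum>i\<in>UNIV. \<Sum>j\<in>UNIV. (A::real^'n^'n) $ i $ j) = (ev v* A) \<bullet> ev"
  by (simp add: vector_matrix_mult_def inner_vec_def ev_def) (rule sum.swap)

lemma sumT: "(\<Sum>i\<in>UNIV. \<Sum>j\<in>UNIV. ((A::real^'n^'n) ** transpose B) $ i $ j) = (ev v* A) \<bullet> (ev v* B)"
proof -
  have "(ev v* A) \<bullet> (ev v* B) = (\<Sum>k\<in>UNIV. \<Sum>i\<in>UNIV. \<Sum>j\<in>UNIV. A$i$k * B$j$k)"
    by (simp add: vector_matrix_mult_def inner_vec_def ev_def sum_product)
  also have "\<dots> = (\<Sum>i\<in>UNIV. \<Sum>k\<in>UNIV. \<Sum>j\<in>UNIV. A$i$k * B$j$k)"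
    by (rule sum.swap)
  also have "\<dots> = (\<Sum>i\<in>UNIV. \<Sum>j\<in>UNIV. \<Sum>k\<in>UNIV. A$i$k * B$j$k)"
    by (rule sum.cong[OF refl], rule sum.swap)
  finally show ?thesis
    by (simp add: matrix_matrix_mult_def transpose_def)
qed

lemma uform: "(uvec::real^'n) \<bullet> ((A::real^'n^'n) *v uvec) = ((ev v* A) \<bullet> ev) / real CARD('n)"
proof -
  have u: "(uvec::real^'n) = (1 / sqrt (real CARD('n))) *\<^sub>R ev"
    by (simp add: uvec_def ev_def vec_eq_iff)
  have "sqrt (real CARD('n)) * sqrt (real CARD('n)) = real CARD('n)" by simp
  then show ?thesis
    by (simp only: u) (simp add: dot_lmul_matrix[symmetric] matrix_vector_mult_scaleR scaleR_vector_matrix_assoc)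
qed



lemma uniq1:
  fixes k k' mt :: "nat \<Rightarrow> real"
  assumes h: "\<And>n. n \<ge> 1 \<Longrightarrow> (\<Sum>a\<in>{1..n}. k a * mt (n-a)) = (\<Sum>a\<in>{1..n}. k' a * mt (n-a))"
    and z: "k 0 = k' 0" and m0: "mt 0 = 1"
  shows "k n = k' n"
proof (induction n rule: less_induct)
  case (less n)
  show ?case
  proof (cases "n = 0")
    case True then show ?thesis using z by simp
  next
    case False
    have I: "{1..n} = insert n {1..<n}" using False by auto
    have "(\<Sum>a\<in>{1..<n}. k a * mt (n-a)) = (\<Sum>a\<in>{1..<n}. k' a * mt (n-a))"
      using less by (intro sum.cong) auto
    have S: "sum g {1..n} = g n + sum g {1..<n}" for g :: "nat \<Rightarrow> real" unfolding I by simp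
    from h[of n] False have "k n * mt 0 + (\<Sum>a\<in>{1..<n}. k a * mt (n-a)) = k' n * mt 0 + (\<Sum>a\<in>{1..<n}. k' a * mt (n-a))"
      by (simp only: S) simp
    with \<open>(\<Sum>a\<in>{1..<n}. k a * mt (n-a)) = _\<close> show ?thesis by (simp add: m0)
  qed
qed

lemma uniq2:
  fixes T T' :: "nat \<Rightarrow> nat \<Rightarrow> real" and mt :: "nat \<Rightarrow> real"
  assumes h: "\<And>n m. n \<ge> 1 \<Longrightarrow> m \<ge> 1 \<Longrightarrow>
      (\<Sum>a\<in>{1..n}. \<Sum>b\<in>{1..m}. mt (n-a) * T a b * mt (m-b)) =
      (\<Sum>a\<in>{1..n}. \<Sum>b\<in>{1..m}. mt (n-a) * T' a b * mt (m-b))"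
    and m0: "mt 0 = 1"
  shows "n \<ge> 1 \<Longrightarrow> m \<ge> 1 \<Longrightarrow> T n m = T' n m"
proof -
  have "\<forall>n m. n + m = s \<longrightarrow> n \<ge> 1 \<longrightarrow> m \<ge> 1 \<longrightarrow> T n m = T' n m" for s
  proof (induction s rule: less_induct)
    case (less s)
    show ?case
    proof (intro allI impI)
      fix n m assume s: "n + m = s" and n: "n \<ge> 1" and m: "m \<ge> 1"
      define f where "f a b = mt (n-a) * (T a b - T' a b) * mt (m-b)" for a b
      have z0: "(\<Sum>a\<in>{1..n}. \<Sum>b\<in>{1..m}. f a b) = 0"
        using h[OF n m] unfolding f_def
        by (simp add: algebra_simps sum_subtractf)
      have "\<And>a b. a \<in> {1..n} \<Longrightarrow> b \<in> {1..m} \<Longrightarrow>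
          f a b = (if a = n then (if b = m then f n m else 0) else 0)"
      proof -
        fix a b assume a: "a \<in> {1..n}" and b: "b \<in> {1..m}"
        show "f a b = (if a = n then (if b = m then f n m else 0) else 0)"
        proof (cases "a = n \<and> b = m")
          case False
          then have "a + b < s" using a b s by auto
          then have "T a b = T' a b" using less a b by auto
          then show ?thesis using False by (auto simp: f_def)
        qed auto
      qed
      then have "(\<Sum>a\<in>{1..n}. \<Sum>b\<in>{1..m}. f a b) =
          (\<Sum>a\<in>{1..n}. \<Sum>b\<in>{1..m}. (if a = n then (if b = m then f n m else 0) else 0))"
        by (intro sum.cong) auto
      also have "\<dots> = (\<Sum>a\<in>{1..n}. (if a = n then f n m else 0))"
        by (intro sum.cong refl) (use m in auto)
      also have "\<dots> = f n m" using n by simp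
      finally have "f n m = 0" using z0 by simp
      then show "T n m = T' n m" by (simp add: f_def m0)
    qed
  qed
  then show "n \<ge> 1 \<Longrightarrow> m \<ge> 1 \<Longrightarrow> T n m = T' n m" by blast
qed



lemma Theta_sym: "transpose (Theta::real^'n^'n) = Theta"
  by (simp add: Theta_def Hmat_def transpose_def mat_def vec_eq_iff mult.commute)

theorem mainTheorem2:
  fixes W :: "real^'n^'n"
  defines "N \<equiv> real CARD('n)"
  shows "(\<forall>n\<ge>1.
            kappa1 W n = (uvec \<bullet> (Wtheta W n *v uvec)) / N ^ n \<and>
            kappa1 W n = (\<Sum>i\<in>UNIV. \<Sum>j\<in>UNIV. (mpow (W ** Theta) (n - 1) ** W) $ i $ j)
                           / N ^ (n + 1))
       \<and> (\<forall>n\<ge>1. \<forall>m\<ge>1.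
            kappa2 W n m =
              (uvec \<bullet> ((Wtheta W n ** Theta ** transpose (Wtheta W m)) *v uvec)) / N ^ (n + m) \<and>
            kappa2 W n m =
              (uvec \<bullet> ((mpow (W ** Theta) (n - 1) ** W ** Theta ** transpose W
                          ** mpow (Theta ** transpose W) (m - 1)) *v uvec)) / N ^ (n + m))"
proof -
  have Np: "N > 0" unfolding N_def by simp
  define s where "s n = ev v* Wtheta W n" for n
  define r where "r n = ev v* mpow W n" for n
  define \<sigma> where "\<sigma> n = (1/N^n) *\<^sub>R s n" for n
  define \<rho> where "\<rho> n = (1/N^n) *\<^sub>R r n" for n
  define mu where "mu n = motif_moment W n 0" for n
  define mu2 where "mu2 n m = motif_moment W n m" for n m
  define mt where "mt j = (if j = 0 then 1 else mu j)" for j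
  have F1: "mu n = (\<rho> n \<bullet> ev) / N" if n1: "n \<ge> 1" for n
  proof -
    obtain k where k: "n = Suc k" using n1 by (cases n) auto
    show ?thesis
      unfolding mu_def motif_moment_def mavg_def k
      by (simp add: summ \<rho>_def r_def N_def[symmetric] power2_eq_square field_simps)
  qed
  have F2: "mu2 n m = (\<rho> n \<bullet> \<rho> m) / N" if n1: "n \<ge> 1" and m1: "m \<ge> 1" for n m
  proof -
    obtain k where k: "n = Suc k" using n1 by (cases n) auto
    show ?thesis
      unfolding mu2_def motif_moment_def mavg_def k
      by (simp add: mpow_transpose sumT \<rho>_def r_def N_def[symmetric] power2_eq_square field_simps power_add)
  qed
  have F3: "\<rho> n = (\<Sum>k\<in>{1..n}. mt (n-k) *\<^sub>R \<sigma> k)" if n1: "n \<ge> 1" for n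
  proof -
    obtain j where j: "n = Suc j" using n1 by (cases n) auto
    have B: "r (Suc j) = s (Suc j) + (\<Sum>k\<in>{1..j}. ((r (Suc j - k) \<bullet> ev) / N) *\<^sub>R s k)"
      unfolding r_def s_def N_def by (rule rowB)
    have T: "(1/N^(Suc j)) *\<^sub>R (((r (Suc j - k) \<bullet> ev) / N) *\<^sub>R s k) = mt (Suc j - k) *\<^sub>R \<sigma> k"
      if k: "k \<in> {1..j}" for k
    proof -
      have mtv: "mt (Suc j - k) = (r (Suc j - k) \<bullet> ev) / N^(Suc j - k) / N"
        using F1[of "Suc j - k"] k by (simp add: mt_def \<rho>_def Suc_diff_le)
      have pw: "N^(Suc j) = N^(Suc j - k) * N^k"
        using k by (simp add: power_add[symmetric])
      show ?thesis unfolding mtv \<sigma>_def pw using Np by simp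
    qed
    have "\<rho> (Suc j) = \<sigma> (Suc j) + (\<Sum>k\<in>{1..j}. (1/N^(Suc j)) *\<^sub>R (((r (Suc j - k) \<bullet> ev) / N) *\<^sub>R s k))"
      unfolding \<rho>_def B \<sigma>_def by (simp add: scaleR_add_right scaleR_sum_right)
    also have "\<dots> = \<sigma> (Suc j) + (\<Sum>k\<in>{1..j}. mt (Suc j - k) *\<^sub>R \<sigma> k)"
      using T by simp
    also have "\<dots> = (\<Sum>k\<in>{1..Suc j}. mt (Suc j - k) *\<^sub>R \<sigma> k)"
      by (simp add: mt_def add.commute)
    finally show ?thesis unfolding j .
  qed
  define kc where "kc n = (if n = 0 then 0 else (\<sigma> n \<bullet> ev) / N)" for n
  define T where "T a b = (\<sigma> a \<bullet> \<sigma> b) / N" for a b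
  define k2c where "k2c n m = (if n = 0 \<or> m = 0 then 0 else T n m - kc n * kc m)" for n m
  have mu_rec: "mu n = (\<Sum>a\<in>{1..n}. kc a * mt (n-a))" if n1: "n \<ge> 1" for n
  proof -
    have "mu n = (\<Sum>a\<in>{1..n}. mt (n-a) * (\<sigma> a \<bullet> ev) / N)"
      using F1[OF n1] F3[OF n1] by (simp add: inner_sum_left sum_divide_distrib)
    also have "\<dots> = (\<Sum>a\<in>{1..n}. kc a * mt (n-a))"
      by (rule sum.cong) (auto simp: kc_def)
    finally show ?thesis .
  qed
  have mu2_rec: "mu2 n m = (\<Sum>a\<in>{1..n}. \<Sum>b\<in>{1..m}. mt (n-a) * T a b * mt (m-b))"
    if n1: "n \<ge> 1" and m1: "m \<ge> 1" for n m
  proof -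
    have "mu2 n m = (\<Sum>a\<in>{1..n}. \<Sum>b\<in>{1..m}. (mt (n-a) *\<^sub>R \<sigma> a) \<bullet> (mt (m-b) *\<^sub>R \<sigma> b)) / N"
      unfolding F2[OF n1 m1] F3[OF n1] F3[OF m1]
      by (subst inner_sum_left, subst inner_sum_right, rule refl)
    also have "\<dots> = (\<Sum>a\<in>{1..n}. \<Sum>b\<in>{1..m}. mt (n-a) * T a b * mt (m-b))"
      by (simp add: sum_divide_distrib T_def) (intro sum.cong refl, simp add: algebra_simps)
    finally show ?thesis .
  qed
  have P_mt: "Pk kc j = mt j" for j
  proof (induction j rule: less_induct)
    case (less j)
    show ?case
    proof (cases "j = 0")
      case True then show ?thesis by (simp add: Pk0 mt_def)
    next
      case False
      then have j1: "j \<ge> 1" by simp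
      have "Pk kc j = (\<Sum>a\<in>{1..j}. kc a * Pk kc (j - a))" by (rule Pk_rec[OF j1])
      also have "\<dots> = (\<Sum>a\<in>{1..j}. kc a * mt (j - a))"
        by (rule sum.cong) (use less in auto)
      also have "\<dots> = mt j" using mu_rec[OF j1] False by (simp add: mt_def)
      finally show ?thesis .
    qed
  qed
  have g_T: "k2c a b + kc a * kc b = T a b" if "a \<in> {1..n}" "b \<in> {1..m}" for a b n m
    using that by (simp add: k2c_def)
  have sys: "cumulant_system W kc k2c"
    unfolding cumulant_system_def
  proof (intro conjI allI impI)
    fix n :: nat assume n1: "n \<ge> 1"
    show "motif_moment W n 0 = (\<Sum>c\<in>compositions n. prod_list (map kc c))"
      using P_mt[of n] n1 by (simp add: Pk_def mt_def mu_def)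
  next
    fix n m :: nat assume n1: "n \<ge> 1" and m1: "m \<ge> 1"
    have "(\<Sum>c\<in>compositions n. \<Sum>d\<in>compositions m.
              prod_list (map kc (tl c)) * (k2c (hd c) (hd d) + kc (hd c) * kc (hd d))
              * prod_list (map kc (tl d)))
       = (\<Sum>a\<in>{1..n}. \<Sum>b\<in>{1..m}. Pk kc (n-a) * (k2c a b + kc a * kc b) * Pk kc (m-b))"
      by (rule sum2_comp[OF n1 m1])
    also have "\<dots> = (\<Sum>a\<in>{1..n}. \<Sum>b\<in>{1..m}. mt (n-a) * T a b * mt (m-b))"
      by (intro sum.cong refl) (simp add: P_mt k2c_def)
    also have "\<dots> = motif_moment W n m" using mu2_rec[OF n1 m1] by (simp add: mu2_def)
    finally show "motif_moment W n m = (\<Sum>c\<in>compositions n. \<Sum>d\<in>compositions m.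
              prod_list (map kc (tl c)) * (k2c (hd c) (hd d) + kc (hd c) * kc (hd d))
              * prod_list (map kc (tl d)))" by simp
  qed
  have uniq: "k = kc \<and> k2 = k2c"
    if S: "cumulant_system W k k2" and k0: "k 0 = 0" and k20: "\<forall>n m. (n = 0 \<or> m = 0) \<longrightarrow> k2 n m = 0"
    for k k2
  proof -
    have Pm: "Pk k j = mt j" for j
    proof (cases "j = 0")
      case True then show ?thesis by (simp add: Pk0 mt_def)
    next
      case False
      then show ?thesis using S unfolding cumulant_system_def
        by (simp add: Pk_def mt_def mu_def)
    qed
    have kk: "k = kc"
    proof
      fix n
      show "k n = kc n"
      proof (rule uniq1[where mt = mt])
        fix n :: nat assume n1: "n \<ge> 1"
        have "(\<Sum>a\<in>{1..n}. k a * mt (n-a)) = Pk k n" using Pk_rec[OF n1, of k] by (simp add: Pm)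
        also have "\<dots> = mu n" using Pm[of n] n1 by (simp add: mt_def)
        also have "\<dots> = (\<Sum>a\<in>{1..n}. kc a * mt (n-a))" by (rule mu_rec[OF n1])
        finally show "(\<Sum>a\<in>{1..n}. k a * mt (n-a)) = (\<Sum>a\<in>{1..n}. kc a * mt (n-a))" .
      qed (simp_all add: k0 kc_def mt_def)
    qed
    have TT: "k2 a b + k a * k b = T a b" if a1: "a \<ge> 1" and b1: "b \<ge> 1" for a b
    proof (rule uniq2[where mt = mt, OF _ _ a1 b1])
      fix n m :: nat assume n1: "n \<ge> 1" and m1: "m \<ge> 1"
      have "(\<Sum>a\<in>{1..n}. \<Sum>b\<in>{1..m}. mt (n-a) * (k2 a b + k a * k b) * mt (m-b))
          = (\<Sum>a\<in>{1..n}. \<Sum>b\<in>{1..m}. Pk k (n-a) * (k2 a b + k a * k b) * Pk k (m-b))"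
        by (simp add: Pm)
      also have "\<dots> = (\<Sum>c\<in>compositions n. \<Sum>d\<in>compositions m.
              prod_list (map k (tl c)) * (k2 (hd c) (hd d) + k (hd c) * k (hd d))
              * prod_list (map k (tl d)))"
        by (rule sum2_comp[OF n1 m1, symmetric])
      also have "\<dots> = mu2 n m" using S n1 m1 unfolding cumulant_system_def mu2_def by simp
      also have "\<dots> = (\<Sum>a\<in>{1..n}. \<Sum>b\<in>{1..m}. mt (n-a) * T a b * mt (m-b))"
        by (rule mu2_rec[OF n1 m1])
      finally show "(\<Sum>a\<in>{1..n}. \<Sum>b\<in>{1..m}. mt (n-a) * (k2 a b + k a * k b) * mt (m-b))
          = (\<Sum>a\<in>{1..n}. \<Sum>b\<in>{1..m}. mt (n-a) * T a b * mt (m-b))" .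
    qed (simp add: mt_def)
    have "k2 = k2c"
    proof (intro ext)
      fix a b
      show "k2 a b = k2c a b"
      proof (cases "a = 0 \<or> b = 0")
        case True then show ?thesis using k20 by (auto simp: k2c_def)
      next
        case False then show ?thesis using TT[of a b] kk by (simp add: k2c_def)
      qed
    qed
    with kk show ?thesis by simp
  qed
  have mc: "motif_cumulants W = (kc, k2c)"
    unfolding motif_cumulants_def
  proof (rule the_equality)
    show "cumulant_system W (fst (kc, k2c)) (snd (kc, k2c)) \<and> fst (kc, k2c) 0 = 0 \<and>
       (\<forall>n m. (n = 0 \<or> m = 0) \<longrightarrow> snd (kc, k2c) n m = 0)"
      using sys by (simp add: kc_def k2c_def)
  next
    fix p :: "(nat \<Rightarrow> real) \<times> (nat \<Rightarrow> nat \<Rightarrow> real)"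
    assume "cumulant_system W (fst p) (snd p) \<and> fst p 0 = 0 \<and> (\<forall>n m. (n = 0 \<or> m = 0) \<longrightarrow> snd p n m = 0)"
    then have "fst p = kc \<and> snd p = k2c" using uniq by blast
    then show "p = (kc, k2c)" by (simp add: prod_eq_iff)
  qed
  have K1: "kappa1 W n = kc n" for n by (simp add: kappa1_def mc)
  have K2: "kappa2 W n m = k2c n m" for n m by (simp add: kappa2_def mc)
  have A1: "uvec \<bullet> (Wtheta W n *v uvec) / N ^ n = kc n" if n1: "n \<ge> 1" for n
    using n1 by (simp add: uform N_def[symmetric] s_def[symmetric] \<sigma>_def kc_def)
  have A2: "(\<Sum>i\<in>UNIV. \<Sum>j\<in>UNIV. (mpow (W ** Theta) (n - 1) ** W) $ i $ j) / N ^ (n + 1) = kc n"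
    if n1: "n \<ge> 1" for n
    using n1 by (simp add: summ Wtheta_def s_def \<sigma>_def kc_def field_simps)
  have A3: "uvec \<bullet> ((Wtheta W n ** Theta ** transpose (Wtheta W m)) *v uvec) / N ^ (n + m) = k2c n m"
    if n1: "n \<ge> 1" and m1: "m \<ge> 1" for n m
  proof -
    have "ev v* (Wtheta W n ** Theta ** transpose (Wtheta W m)) = Wtheta W m *v (s n v* Theta)"
      by (simp add: s_def vector_matrix_mul_assoc[symmetric])
    then have "(ev v* (Wtheta W n ** Theta ** transpose (Wtheta W m))) \<bullet> ev = s m \<bullet> (s n v* Theta)"
      by (simp add: inner_commute[of _ ev] dot_lmul_matrix[symmetric] s_def)
    also have "\<dots> = s m \<bullet> s n - (s n \<bullet> ev) * (s m \<bullet> ev) / N"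
      by (simp add: rowTheta N_def[symmetric] inner_diff_right inner_commute)
    finally have E: "(ev v* (Wtheta W n ** Theta ** transpose (Wtheta W m))) \<bullet> ev =
        s m \<bullet> s n - (s n \<bullet> ev) * (s m \<bullet> ev) / N" .
    have U: "uvec \<bullet> ((Wtheta W n ** Theta ** transpose (Wtheta W m)) *v uvec) =
        (s m \<bullet> s n - (s n \<bullet> ev) * (s m \<bullet> ev) / N) / N"
      unfolding uform N_def[symmetric] E by (rule refl)
    show ?thesis unfolding U
      using n1 m1 Np
      by (simp add: k2c_def T_def kc_def \<sigma>_def field_simps power_add inner_commute)
  qed
  have A4: "mpow (W ** Theta) (n - 1) ** W ** Theta ** transpose W ** mpow (Theta ** transpose W) (m - 1)
      = Wtheta W n ** Theta ** transpose (Wtheta W m)" for n m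
    by (simp add: Wtheta_def matrix_transpose_mul mpow_transpose[symmetric] Theta_sym matrix_mul_assoc)
  show ?thesis using A1 A2 A3 A4 K1 K2 by simp
qed

end
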